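(* Let $q$ be a prime power, $t>1$ an integer, and $\Gamma_1,\ldots,\Gamma_t$ pairwise disjoint projective bundles of conics in $\mathrm{PG}(2,q)$. Let $A$ be the binary point-line incidence matrix of $\mathrm{PG}(2,q)$ and $B_i$ the binary point-conic incidence matrix of $\Gamma_i$ (rows indexed by the points in the same order), and let $H_{q,t}=(A\mid B_1\mid\cdots\mid B_t)$. Then the maximum column intersection of $H_{q,t}$ is at most $4$. Consequently, one round of the bit-flipping decoding algorithm with respect to $H_{q,t}$ corrects every error of Hamming weight at most $\lfloor\frac{q+1}{8}\rfloor$ in the code $C=\ker(H_{q,t})=\{c: cH_{q,t}^\top=0\}$; that is, for every $c\in C$ and $e$ with $\mathrm{wt}(e)\le\lfloor\frac{q+1}{8}\rfloor$, one round applied to $c+e$ outputs $c$.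
   Context: $\mathrm{PG}(2,q)$ is the projective plane whose points and lines are the 1- and 2-dimensional subspaces of $\mathbb{F}_q^3$. A (non-degenerate) conic is the set of points of $\mathrm{PG}(2,q)$ satisfying an irreducible homogeneous quadratic equation; it has $q+1$ points and meets every line in at most two points. A projective bundle of conics is a collection of $q^2+q+1$ conics any two of which meet in exactly one point; two bundles are disjoint if they share no conic. The maximum column intersection of a binary matrix is the maximum, over pairs of distinct columns, of the number of rows in which both columns have a $1$. $H_{q,t}$ has constant column weight $v=q+1$. One round of the bit-flipping algorithm on input $y$ for a binary matrix $H$ of constant column weight $v$: compute $s=Hy^\top$; for each column $j$ let $u_j$ be the number of rows $i$ with $H_{ij}=1$ and $s_i=1$; output $y$ with the bits in positions $\{j: u_j>v/2\}$ flipped. *)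

theory Defs
  imports Main "HOL-Library.Cardinality"
begin

type_synonym 'a vec3 = "'a \<times> 'a \<times> 'a"

definition sc3 :: "'a::field \<Rightarrow> 'a vec3 \<Rightarrow> 'a vec3" where
  "sc3 c v = (case v of (x, y, z) \<Rightarrow> (c * x, c * y, c * z))"

definition dot3 :: "'a::field vec3 \<Rightarrow> 'a vec3 \<Rightarrow> 'a" where
  "dot3 u v = (case u of (a, b, c) \<Rightarrow> case v of (x, y, z) \<Rightarrow> a * x + b * y + c * z)"

definition pg_point :: "'a::field vec3 \<Rightarrow> 'a vec3 set" where
  "pg_point v = {sc3 c v | c. True}"

definition pg_points :: "'a::field vec3 set set" where
  "pg_points = {pg_point v | v. v \<noteq> (0, 0, 0)}"

text \<open>A line is a 2-dimensional subspace, i.e. the kernel of a nonzero linear functional u;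
  we represent it by the set of points it contains (incidence = containment).\<close>
definition pg_line_of :: "'a::field vec3 \<Rightarrow> 'a vec3 set set" where
  "pg_line_of u = {P \<in> pg_points. \<forall>x\<in>P. dot3 u x = 0}"

definition pg_lines :: "'a::field vec3 set set set" where
  "pg_lines = {pg_line_of u | u. u \<noteq> (0, 0, 0)}"

type_synonym 'a qcoef = "'a \<times> 'a \<times> 'a \<times> 'a \<times> 'a \<times> 'a"

definition qform :: "'a::field qcoef \<Rightarrow> 'a vec3 \<Rightarrow> 'a" where
  "qform Q v = (case Q of (a, b, c, d, e, f) \<Rightarrow> case v of (x, y, z) \<Rightarrow>
      a * x^2 + b * y^2 + c * z^2 + d * x * y + e * x * z + f * y * z)"

text \<open>The (half-)discriminant; the form defines a non-degenerate (absolutely irreducible)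
  conic iff it is nonzero (valid in every characteristic).\<close>
definition qdisc :: "'a::field qcoef \<Rightarrow> 'a" where
  "qdisc Q = (case Q of (a, b, c, d, e, f) \<Rightarrow>
      4 * a * b * c - a * f^2 - b * e^2 - c * d^2 + d * e * f)"

definition conic_of :: "'a::field qcoef \<Rightarrow> 'a vec3 set set" where
  "conic_of Q = {P \<in> pg_points. \<forall>x\<in>P. qform Q x = 0}"

definition pg_conics :: "'a::field vec3 set set set" where
  "pg_conics = {conic_of Q | Q. qdisc Q \<noteq> 0}"

definition proj_bundle :: "('a::{finite,field}) vec3 set set set \<Rightarrow> bool" where
  "proj_bundle \<Gamma> \<longleftrightarrow> \<Gamma> \<subseteq> pg_conics
     \<and> card \<Gamma> = CARD('a)^2 + CARD('a) + 1
     \<and> (\<forall>C\<in>\<Gamma>. \<forall>D\<in>\<Gamma>. C \<noteq> D \<longrightarrow> card (C \<inter> D) = 1)"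

definition max_col_intersection :: "'r set \<Rightarrow> 'k set \<Rightarrow> ('r \<Rightarrow> 'k \<Rightarrow> bool) \<Rightarrow> nat" where
  "max_col_intersection R K H =
     Max {card {r \<in> R. H r j \<and> H r k} | j k. j \<in> K \<and> k \<in> K \<and> j \<noteq> k}"

definition syndrome :: "'r set \<Rightarrow> 'k set \<Rightarrow> ('r \<Rightarrow> 'k \<Rightarrow> bool) \<Rightarrow> ('k \<Rightarrow> bool) \<Rightarrow> 'r \<Rightarrow> bool" where
  "syndrome R K H y r = odd (card {j \<in> K. H r j \<and> y j})"

definition unsat :: "'r set \<Rightarrow> 'k set \<Rightarrow> ('r \<Rightarrow> 'k \<Rightarrow> bool) \<Rightarrow> ('k \<Rightarrow> bool) \<Rightarrow> 'k \<Rightarrow> nat" where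
  "unsat R K H y j = card {r \<in> R. H r j \<and> syndrome R K H y r}"

text \<open>One round of bit flipping for column weight v: flip bit j iff u_j > v/2.\<close>
definition bitflip :: "'r set \<Rightarrow> 'k set \<Rightarrow> ('r \<Rightarrow> 'k \<Rightarrow> bool) \<Rightarrow> nat \<Rightarrow> ('k \<Rightarrow> bool) \<Rightarrow> 'k \<Rightarrow> bool" where
  "bitflip R K H v y j = (if 2 * unsat R K H y j > v then \<not> y j else y j)"

definition in_kernel :: "'r set \<Rightarrow> 'k set \<Rightarrow> ('r \<Rightarrow> 'k \<Rightarrow> bool) \<Rightarrow> ('k \<Rightarrow> bool) \<Rightarrow> bool" where
  "in_kernel R K H c \<longleftrightarrow> (\<forall>r\<in>R. even (card {j \<in> K. H r j \<and> c j}))"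

definition hweight :: "'k set \<Rightarrow> ('k \<Rightarrow> bool) \<Rightarrow> nat" where
  "hweight K e = card {j \<in> K. e j}"

text \<open>Columns: Inl L for lines L (matrix A), Inr (i, C) for conics C of bundle i (matrix B_i).
  Rows: points of PG(2,q).\<close>
definition Hcols :: "nat \<Rightarrow> (nat \<Rightarrow> 'a::field vec3 set set set)
     \<Rightarrow> ('a vec3 set set + nat \<times> 'a vec3 set set) set" where
  "Hcols t \<Gamma> = Inl ` pg_lines \<union> (\<Union>i\<in>{1..t}. (\<lambda>C. Inr (i, C)) ` \<Gamma> i)"

definition Hent :: "'a vec3 set \<Rightarrow> ('a vec3 set set + nat \<times> 'a vec3 set set) \<Rightarrow> bool" where
  "Hent P col = (case col of Inl L \<Rightarrow> P \<in> L | Inr (i, C) \<Rightarrow> P \<in> C)"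

end

theory Submission
  imports Defs "HOL-Computational_Algebra.Polynomial"
begin

lemma ff_char: "(of_nat CARD('a) :: 'a::{finite,field}) = 0"
proof -
  have "(\<Sum>x\<in>(UNIV::'a set). x + 1) = (\<Sum>x\<in>UNIV. x)"
    by (rule sum.reindex_bij_witness[of _ "\<lambda>x. x - 1" "\<lambda>x. x + 1"]) auto
  then have "(\<Sum>x\<in>(UNIV::'a set). x) + of_nat CARD('a) = (\<Sum>x\<in>UNIV. x)"
    by (simp add: sum.distrib)
  then show ?thesis by simp
qed

lemma ff_card_ge2: "CARD('a::{finite,field}) \<ge> 2"
proof -
  have "{0::'a, 1} \<subseteq> UNIV" by simp
  then have "card {0::'a, 1} \<le> CARD('a)" by (intro card_mono) simp_all
  then show ?thesis by simp
qed

lemma ff_fermat: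
  fixes x :: "'a::{finite,field}"
  assumes "x \<noteq> 0" shows "x ^ (CARD('a) - 1) = 1"
proof -
  let ?N = "{y::'a. y \<noteq> 0}"
  have cN: "card ?N = CARD('a) - 1"
  proof -
    have "?N = UNIV - {0}" by auto
    then show ?thesis by (simp add: card_Diff_subset)
  qed
  have "(\<Prod>y\<in>?N. x * y) = (\<Prod>y\<in>?N. y)"
    by (rule prod.reindex_bij_witness[of _ "\<lambda>y. y / x" "\<lambda>y. x * y"]) (use assms in auto)
  then have "x ^ card ?N * (\<Prod>y\<in>?N. y) = (\<Prod>y\<in>?N. y)"
    by (simp add: prod.distrib)
  moreover have "(\<Prod>y\<in>?N. y) \<noteq> 0" by simp
  ultimately show ?thesis using cN by simp
qed

lemma ff_powsum:
  assumes "i < CARD('a::{finite,field}) - 1"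
  shows "(\<Sum>x\<in>(UNIV::'a set). x ^ i) = 0"
proof (cases "i = 0")
  case True then show ?thesis using ff_char[where 'a='a] by simp
next
  case False
  have "\<exists>a::'a. a \<noteq> 0 \<and> a ^ i \<noteq> 1"
  proof (rule ccontr)
    assume "\<not> ?thesis"
    then have sub: "{y::'a. y \<noteq> 0} \<subseteq> {x. poly (monom 1 i - 1) x = 0}"
      by (auto simp: poly_monom)
    have ne: "monom (1::'a) i - 1 \<noteq> 0"
    proof
      assume "monom (1::'a) i - 1 = 0"
      then have "poly (monom (1::'a) i - 1) 0 = 0" by simp
      then show False using False by (simp add: poly_monom zero_power)
    qed
    have "card {y::'a. y \<noteq> 0} \<le> card {x. poly (monom (1::'a) i - 1) x = 0}"
      by (rule card_mono[OF _ sub]) simp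
    also have "\<dots> \<le> degree (monom (1::'a) i - 1)" by (rule card_poly_roots_bound[OF ne])
    also have "\<dots> \<le> i" by (rule degree_diff_le) (auto intro: degree_monom_le)
    finally have "card {y::'a. y \<noteq> 0} \<le> i" .
    moreover have "card {y::'a. y \<noteq> 0} = CARD('a) - 1"
    proof -
      have "{y::'a. y \<noteq> 0} = UNIV - {0}" by auto
      then show ?thesis by (simp add: card_Diff_subset)
    qed
    ultimately show False using assms by simp
  qed
  then obtain a :: 'a where a: "a \<noteq> 0" "a ^ i \<noteq> 1" by blast
  have "(\<Sum>x\<in>(UNIV::'a set). (a * x) ^ i) = (\<Sum>x\<in>UNIV. x ^ i)"
    by (rule sum.reindex_bij_witness[of _ "\<lambda>y. y / a" "\<lambda>y. a * y"]) (use a in auto)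
  then have "a ^ i * (\<Sum>x\<in>(UNIV::'a set). x ^ i) = 1 * (\<Sum>x\<in>UNIV. x ^ i)"
    by (simp add: power_mult_distrib sum_distrib_left)
  then show ?thesis using a(2) by (metis mult_cancel_right)
qed

definition mono3 :: "nat \<times> nat \<times> nat \<Rightarrow> 'a::field vec3 \<Rightarrow> 'a" where
  "mono3 m v = (case m of (i,j,k) \<Rightarrow> case v of (x,y,z) \<Rightarrow> x^i*y^j*z^k)"

definition deg3 :: "nat \<times> nat \<times> nat \<Rightarrow> nat" where
  "deg3 m = (case m of (i,j,k) \<Rightarrow> i+j+k)"

definition madd :: "nat \<times> nat \<times> nat \<Rightarrow> nat \<times> nat \<times> nat \<Rightarrow> nat \<times> nat \<times> nat" where
  "madd m m' = (case m of (i,j,k) \<Rightarrow> case m' of (i',j',k') \<Rightarrow> (i+i',j+j',k+k'))"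

definition pevl :: "('a::field \<times> nat \<times> nat \<times> nat) list \<Rightarrow> 'a vec3 \<Rightarrow> 'a" where
  "pevl L v = sum_list (map (\<lambda>(c,m). c * mono3 m v) L)"

definition polyfn :: "nat \<Rightarrow> ('a::field vec3 \<Rightarrow> 'a) \<Rightarrow> bool" where
  "polyfn n f \<longleftrightarrow> (\<exists>L. (\<forall>(c,m)\<in>set L. deg3 m \<le> n) \<and> f = pevl L)"

lemma mono3_madd: "mono3 (madd m m') v = mono3 m v * mono3 m' v"
  by (cases m; cases m'; cases v) (simp add: mono3_def madd_def power_add algebra_simps)

lemma deg3_madd: "deg3 (madd m m') = deg3 m + deg3 m'"
  by (cases m; cases m') (simp add: deg3_def madd_def)

definition pmul :: "('a::field \<times> nat \<times> nat \<times> nat) list \<Rightarrow> ('a \<times> nat \<times> nat \<times> nat) list \<Rightarrow> ('a \<times> nat \<times> nat \<times> nat) list" where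
  "pmul L L' = concat (map (\<lambda>(c,m). map (\<lambda>(c',m'). (c*c', madd m m')) L') L)"

lemma pevl_Cons: "pevl ((c,m)#L) v = c * mono3 m v + pevl L v"
  by (simp add: pevl_def)

lemma pevl_append: "pevl (L @ L') v = pevl L v + pevl L' v"
  by (simp add: pevl_def)

lemma pevl_pmul: "pevl (pmul L L') v = pevl L v * pevl L' v"
proof (induction L)
  case Nil then show ?case by (simp add: pevl_def pmul_def)
next
  case (Cons a L)
  obtain c m where a: "a = (c,m)" by (cases a)
  have "pevl (map (\<lambda>(c',m'). (c*c', madd m m')) L') v = c * mono3 m v * pevl L' v"
    by (induction L') (auto simp: pevl_def mono3_madd algebra_simps)
  then show ?case using Cons by (simp add: a pmul_def pevl_append pevl_Cons algebra_simps)
qed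

lemma polyfn_mult:
  assumes "polyfn n f" "polyfn n' g"
  shows "polyfn (n+n') (\<lambda>v. f v * g v)"
proof -
  obtain L where L: "\<forall>(c,m)\<in>set L. deg3 m \<le> n" "f = pevl L" using assms(1) polyfn_def by blast
  obtain L' where L': "\<forall>(c,m)\<in>set L'. deg3 m \<le> n'" "g = pevl L'" using assms(2) polyfn_def by blast
  have "\<forall>(c,m)\<in>set (pmul L L'). deg3 m \<le> n + n'"
    using L(1) L'(1) by (fastforce simp: pmul_def deg3_madd intro: add_mono)
  moreover have "(\<lambda>v. f v * g v) = pevl (pmul L L')"
    by (simp add: L L' pevl_pmul fun_eq_iff)
  ultimately show ?thesis unfolding polyfn_def by blast
qed

lemma polyfn_const: "polyfn n (\<lambda>v. c)"
  unfolding polyfn_def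
  by (rule exI[of _ "[(c,(0,0,0))]"]) (simp add: pevl_def mono3_def deg3_def fun_eq_iff split: prod.splits)

lemma polyfn_pow: "polyfn n f \<Longrightarrow> polyfn (k*n) (\<lambda>v. f v ^ k)"
proof (induction k)
  case 0 then show ?case using polyfn_const[of 0 1] by simp
next
  case (Suc k)
  then have "polyfn (n + k*n) (\<lambda>v. f v * f v ^ k)" by (intro polyfn_mult) auto
  then show ?case by (simp add: add.commute)
qed

lemma polyfn_diff:
  assumes "polyfn n f" "polyfn n g" shows "polyfn n (\<lambda>v. f v - g v)"
proof -
  obtain L where L: "\<forall>(c,m)\<in>set L. deg3 m \<le> n" "f = pevl L" using assms(1) polyfn_def by blast
  obtain L' where L': "\<forall>(c,m)\<in>set L'. deg3 m \<le> n" "g = pevl L'" using assms(2) polyfn_def by blast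
  let ?M = "L @ map (\<lambda>(c,m). (-c, m)) L'"
  have "\<forall>(c,m)\<in>set ?M. deg3 m \<le> n" using L(1) L'(1) by auto
  moreover have "pevl (map (\<lambda>(c,m). (-c, m)) L') v = - pevl L' v" for v
    by (induction L') (auto simp: pevl_def)
  then have "(\<lambda>v. f v - g v) = pevl ?M" by (simp add: L L' pevl_append fun_eq_iff)
  ultimately show ?thesis unfolding polyfn_def by blast
qed

lemma polyfn_qform: "polyfn 2 (qform Q)"
proof -
  obtain a b c d e f where Q: "Q = (a,b,c,d,e,f)" by (cases Q) auto
  let ?L = "[(a,(2,0,0)),(b,(0,2,0)),(c,(0,0,2)),(d,(1,1,0)),(e,(1,0,1)),(f,(0,1,1))]"
  have "qform Q = pevl ?L"
    by (auto simp: fun_eq_iff Q qform_def pevl_def mono3_def algebra_simps)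
  moreover have "\<forall>(c,m)\<in>set ?L. deg3 m \<le> 2" by (auto simp: deg3_def)
  ultimately show ?thesis unfolding polyfn_def by blast
qed

lemma sum_vec3: "(\<Sum>v\<in>(UNIV::'a::finite vec3 set). f v) = (\<Sum>x\<in>UNIV. \<Sum>y\<in>UNIV. \<Sum>z\<in>UNIV. f (x,y,z))"
proof -
  have "(\<Sum>x\<in>(UNIV::'a set). \<Sum>y\<in>UNIV. \<Sum>z\<in>UNIV. f (x,y,z)) = (\<Sum>x\<in>(UNIV::'a set). \<Sum>p\<in>UNIV \<times> UNIV. f (x, p))"
    by (simp add: sum.cartesian_product)
  also have "\<dots> = (\<Sum>v\<in>UNIV \<times> (UNIV \<times> UNIV). f v)"
    by (simp add: sum.cartesian_product)
  finally show ?thesis by simp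
qed

lemma sum_mono3:
  assumes "deg3 m < 3 * (CARD('a::{finite,field}) - 1)"
  shows "(\<Sum>v\<in>(UNIV::'a vec3 set). mono3 m v) = 0"
proof -
  obtain i j k where m: "m = (i,j,k)" by (cases m) auto
  have "(\<Sum>v\<in>(UNIV::'a vec3 set). mono3 m v) =
     (\<Sum>x\<in>(UNIV::'a set). x^i) * (\<Sum>y\<in>(UNIV::'a set). y^j) * (\<Sum>z\<in>(UNIV::'a set). z^k)"
  proof -
    have "(\<Sum>v\<in>(UNIV::'a vec3 set). mono3 m v) = (\<Sum>x\<in>(UNIV::'a set). x^i * (\<Sum>y\<in>(UNIV::'a set). y^j * (\<Sum>z\<in>(UNIV::'a set). z^k)))"
      by (simp add: sum_vec3 m mono3_def sum_distrib_left mult.assoc)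
    also have "\<dots> = (\<Sum>x\<in>(UNIV::'a set). x^i) * ((\<Sum>y\<in>(UNIV::'a set). y^j) * (\<Sum>z\<in>(UNIV::'a set). z^k))"
      by (simp add: sum_distrib_right)
    finally show ?thesis by (simp add: mult.assoc)
  qed
  moreover have "i < CARD('a) - 1 \<or> j < CARD('a) - 1 \<or> k < CARD('a) - 1"
    using assms unfolding m deg3_def by simp linarith
  ultimately show ?thesis using ff_powsum[where 'a='a] by auto
qed

lemma polyfn_sum:
  assumes "polyfn n f" "n < 3 * (CARD('a::{finite,field}) - 1)"
  shows "(\<Sum>v\<in>(UNIV::'a vec3 set). f v) = 0"
proof -
  obtain L where L: "\<forall>(c,m)\<in>set L. deg3 m \<le> n" "f = pevl L" using assms(1) polyfn_def by blast
  have "(\<forall>(c,m)\<in>set L. deg3 m \<le> n) \<Longrightarrow> (\<Sum>v\<in>(UNIV::'a vec3 set). pevl L v) = 0"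
  proof (induction L)
    case Nil then show ?case by (simp add: pevl_def)
  next
    case (Cons a L)
    obtain c m where a: "a = (c,m)" by (cases a)
    have "(\<Sum>v\<in>(UNIV::'a vec3 set). mono3 m v) = 0"
      using Cons.prems assms(2) by (intro sum_mono3) (auto simp: a)
    then have "(\<Sum>v\<in>(UNIV::'a vec3 set). c * mono3 m v) = 0" by (simp add: sum_distrib_left[symmetric])
    then show ?case using Cons by (simp add: a pevl_Cons sum.distrib)
  qed
  then show ?thesis using L by simp
qed

lemma qform_has_zero:
  fixes Q :: "'a::{finite,field} qcoef"
  shows "\<exists>v. v \<noteq> (0,0,0) \<and> qform Q v = 0"
proof (rule ccontr)
  assume H: "\<not> ?thesis"
  let ?q = "CARD('a)"
  have q2: "?q \<ge> 2" by (rule ff_card_ge2)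
  have P: "polyfn ((?q - 1) * 2) (\<lambda>v. 1 - qform Q v ^ (?q - 1))"
    by (intro polyfn_diff polyfn_pow polyfn_qform polyfn_const)
  have "(?q - 1) * 2 < 3 * (?q - 1)" using q2 by simp
  then have S: "(\<Sum>v\<in>(UNIV::'a vec3 set). 1 - qform Q v ^ (?q - 1)) = 0"
    by (rule polyfn_sum[OF P])
  have fe: "(\<lambda>v. 1 - qform Q v ^ (?q - 1)) = (\<lambda>v. if v = (0,0,0) then 1 else 0)"
  proof
    fix v :: "'a vec3"
    show "1 - qform Q v ^ (?q - 1) = (if v = (0,0,0) then 1 else 0)"
    proof (cases "v = (0,0,0)")
      case True
      then have "qform Q v = 0" by (cases Q) (simp add: qform_def)
      then show ?thesis using True q2 by simp
    next
      case False
      then have "qform Q v \<noteq> 0" using H by blast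
      then show ?thesis using False ff_fermat by simp
    qed
  qed
  have "(\<Sum>v\<in>(UNIV::'a vec3 set). 1 - qform Q v ^ (?q - 1)) = 1" unfolding fe by (simp add: sum.delta)
  then show False using S by simp
qed

definition bil :: "'a::field qcoef \<Rightarrow> 'a vec3 \<Rightarrow> 'a vec3 \<Rightarrow> 'a" where
  "bil Q u v = (case Q of (a, b, c, d, e, f) \<Rightarrow> case u of (x, y, z) \<Rightarrow> case v of (x', y', z') \<Rightarrow>
      2*a*x*x' + 2*b*y*y' + 2*c*z*z' + d*(x*y'+y*x') + e*(x*z'+z*x') + f*(y*z'+z*y'))"

definition qtrans :: "'a::field qcoef \<Rightarrow> 'a vec3 \<Rightarrow> 'a vec3 \<Rightarrow> 'a vec3 \<Rightarrow> 'a qcoef" where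
  "qtrans Q u v w = (qform Q u, qform Q v, qform Q w, bil Q u v, bil Q u w, bil Q v w)"

definition det3 :: "'a::field vec3 \<Rightarrow> 'a vec3 \<Rightarrow> 'a vec3 \<Rightarrow> 'a" where
  "det3 u v w = (case u of (a1,a2,a3) \<Rightarrow> case v of (b1,b2,b3) \<Rightarrow> case w of (c1,c2,c3) \<Rightarrow>
     a1*(b2*c3-b3*c2) - a2*(b1*c3-b3*c1) + a3*(b1*c2-b2*c1))"

definition comb3 :: "'a::field \<Rightarrow> 'a vec3 \<Rightarrow> 'a \<Rightarrow> 'a vec3 \<Rightarrow> 'a \<Rightarrow> 'a vec3 \<Rightarrow> 'a vec3" where
  "comb3 x u y v z w = (case u of (a1,a2,a3) \<Rightarrow> case v of (b1,b2,b3) \<Rightarrow> case w of (c1,c2,c3) \<Rightarrow>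
     (x*a1+y*b1+z*c1, x*a2+y*b2+z*c2, x*a3+y*b3+z*c3))"

lemma qdisc_trans:
  "qdisc (qtrans Q u v w) = (det3 u v w)^2 * qdisc Q"
proof -
  obtain A B C D E F where Q: "Q = (A,B,C,D,E,F)" by (cases Q) auto
  obtain a1 a2 a3 where u: "u = (a1,a2,a3)" by (cases u) auto
  obtain b1 b2 b3 where v: "v = (b1,b2,b3)" by (cases v) auto
  obtain c1 c2 c3 where w: "w = (c1,c2,c3)" by (cases w) auto
  show ?thesis
    unfolding Q u v w qdisc_def qtrans_def qform_def bil_def det3_def
    by (simp add: power2_eq_square) algebra
qed

lemma qform_comb: "qform Q (comb3 x u y v z w) = qform (qtrans Q u v w) (x,y,z)"
proof -
  obtain A B C D E F where Q: "Q = (A,B,C,D,E,F)" by (cases Q) auto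
  obtain a1 a2 a3 where u: "u = (a1,a2,a3)" by (cases u) auto
  obtain b1 b2 b3 where v: "v = (b1,b2,b3)" by (cases v) auto
  obtain c1 c2 c3 where w: "w = (c1,c2,c3)" by (cases w) auto
  show ?thesis
    unfolding Q u v w qtrans_def qform_def bil_def comb3_def
    by (simp add: power2_eq_square) algebra
qed

lemma det3_comb1: "det3 (comb3 x u y v z w) v w = x * det3 u v w"
proof -
  obtain a1 a2 a3 where u: "u = (a1,a2,a3)" by (cases u) auto
  obtain b1 b2 b3 where v: "v = (b1,b2,b3)" by (cases v) auto
  obtain c1 c2 c3 where w: "w = (c1,c2,c3)" by (cases w) auto
  show ?thesis unfolding u v w det3_def comb3_def by simp algebra
qed

lemma det3_comb2: "det3 u (comb3 x u y v z w) w = y * det3 u v w"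
proof -
  obtain a1 a2 a3 where u: "u = (a1,a2,a3)" by (cases u) auto
  obtain b1 b2 b3 where v: "v = (b1,b2,b3)" by (cases v) auto
  obtain c1 c2 c3 where w: "w = (c1,c2,c3)" by (cases w) auto
  show ?thesis unfolding u v w det3_def comb3_def by simp algebra
qed

lemma det3_comb3: "det3 u v (comb3 x u y v z w) = z * det3 u v w"
proof -
  obtain a1 a2 a3 where u: "u = (a1,a2,a3)" by (cases u) auto
  obtain b1 b2 b3 where v: "v = (b1,b2,b3)" by (cases v) auto
  obtain c1 c2 c3 where w: "w = (c1,c2,c3)" by (cases w) auto
  show ?thesis unfolding u v w det3_def comb3_def by simp algebra
qed

lemma comb3_indep:
  assumes "det3 u v w \<noteq> 0" "comb3 x u y v z w = (0,0,0)"
  shows "x = 0" "y = 0" "z = 0"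
proof -
  have d0: "det3 (0,0,0) v w = 0" "det3 u (0,0,0) w = 0" "det3 u v (0,0,0) = 0"
    by (cases u rule: prod_cases3, cases v rule: prod_cases3, cases w rule: prod_cases3, simp add: det3_def)+
  show "x = 0" using det3_comb1[of x u y v z w] assms d0 by simp
  show "y = 0" using det3_comb2[of u x y v z w] assms d0 by simp
  show "z = 0" using det3_comb3[of u v x y z w] assms d0 by simp
qed

lemma cramer:
  assumes "det3 u v w \<noteq> 0"
  shows "p = comb3 (det3 p v w / det3 u v w) u (det3 u p w / det3 u v w) v (det3 u v p / det3 u v w) w"
proof -
  obtain a1 a2 a3 where u: "u = (a1,a2,a3)" by (cases u) auto
  obtain b1 b2 b3 where v: "v = (b1,b2,b3)" by (cases v) auto
  obtain c1 c2 c3 where w: "w = (c1,c2,c3)" by (cases w) auto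
  obtain p1 p2 p3 where p: "p = (p1,p2,p3)" by (cases p) auto
  let ?D = "det3 u v w"
  have D: "?D = a1*(b2*c3-b3*c2) - a2*(b1*c3-b3*c1) + a3*(b1*c2-b2*c1)" by (simp add: u v w det3_def)
  have "?D * p1 = det3 p v w * a1 + det3 u p w * b1 + det3 u v p * c1"
       "?D * p2 = det3 p v w * a2 + det3 u p w * b2 + det3 u v p * c2"
       "?D * p3 = det3 p v w * a3 + det3 u p w * b3 + det3 u v p * c3"
    by (simp_all add: u v w p det3_def; algebra)+
  then show ?thesis using assms
    by (simp add: u v w p comb3_def field_simps)
qed

lemma sing1:
  assumes "qdisc Q \<noteq> 0" "det3 u v w \<noteq> 0" "qform Q u = 0" "qform Q v = 0" "bil Q u v = 0"
  shows False
proof -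
  have "qdisc (qtrans Q u v w) = 0" using assms(3-5) by (simp add: qtrans_def qdisc_def)
  then show False using assms(1,2) qdisc_trans[of Q u v w] by simp
qed

lemma sing2:
  assumes "qdisc Q \<noteq> 0" "det3 u v w \<noteq> 0" "qform Q u = 0" "bil Q u v = 0" "bil Q u w = 0"
  shows False
proof -
  have "qdisc (qtrans Q u v w) = 0" using assms(3-5) by (simp add: qtrans_def qdisc_def)
  then show False using assms(1,2) qdisc_trans[of Q u v w] by simp
qed

lemma qform_sc3: "qform Q (sc3 c v) = c^2 * qform Q v"
  by (cases Q; cases v rule: prod_cases3) (simp add: qform_def sc3_def power2_eq_square algebra_simps)

lemma dot3_sc3: "dot3 u (sc3 c v) = c * dot3 u v"
  by (cases u rule: prod_cases3; cases v rule: prod_cases3) (simp add: dot3_def sc3_def algebra_simps)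

lemma sc3_1: "sc3 1 v = v"
  by (cases v rule: prod_cases3) (simp add: sc3_def)

lemma sc3_sc3: "sc3 a (sc3 b v) = sc3 (a*b) v"
  by (cases v rule: prod_cases3) (simp add: sc3_def)

lemma sc3_zero_iff: "sc3 c v = (0,0,0) \<longleftrightarrow> c = 0 \<or> v = (0,0,0)"
  by (cases v rule: prod_cases3) (auto simp add: sc3_def)

lemma mem_pg_point: "x \<in> pg_point v \<longleftrightarrow> (\<exists>c. x = sc3 c v)"
  by (auto simp: pg_point_def)

lemma pg_point_self: "v \<in> pg_point v"
  using sc3_1 by (metis mem_pg_point)

lemma pg_point_eqI:
  assumes "w = sc3 c v" "c \<noteq> 0"
  shows "pg_point w = pg_point v"
proof -
  have "v = sc3 (1/c) w" using assms by (simp add: sc3_sc3 sc3_1)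
  show ?thesis
  proof (rule set_eqI)
    fix x
    show "x \<in> pg_point w \<longleftrightarrow> x \<in> pg_point v"
    proof
      assume "x \<in> pg_point w"
      then obtain k where "x = sc3 k w" by (auto simp: mem_pg_point)
      then have "x = sc3 (k*c) v" using assms by (simp add: sc3_sc3)
      then show "x \<in> pg_point v" by (auto simp: mem_pg_point)
    next
      assume "x \<in> pg_point v"
      then obtain k where "x = sc3 k v" by (auto simp: mem_pg_point)
      then have "x = sc3 (k*(1/c)) w" using \<open>v = sc3 (1/c) w\<close> by (simp add: sc3_sc3)
      then show "x \<in> pg_point w" by (auto simp: mem_pg_point)
    qed
  qed
qed

lemma pg_point_eqD:
  assumes "pg_point w = pg_point v"
  shows "\<exists>c. w = sc3 c v"
  using assms pg_point_self mem_pg_point by metis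

lemma pg_points_rep: "P \<in> pg_points \<Longrightarrow> \<exists>v. v \<noteq> (0,0,0) \<and> P = pg_point v"
  unfolding pg_points_def by blast

lemma pg_point_in: "v \<noteq> (0,0,0) \<Longrightarrow> pg_point v \<in> pg_points"
  unfolding pg_points_def by blast

lemma conic_mem:
  assumes "v \<noteq> (0,0,0)"
  shows "pg_point v \<in> conic_of Q \<longleftrightarrow> qform Q v = 0"
  using assms pg_point_in[OF assms] pg_point_self[of v]
  by (auto simp: conic_of_def mem_pg_point qform_sc3)

lemma line_mem:
  assumes "v \<noteq> (0,0,0)"
  shows "pg_point v \<in> pg_line_of u \<longleftrightarrow> dot3 u v = 0"
  using assms pg_point_in[OF assms] pg_point_self[of v]
  by (auto simp: pg_line_of_def mem_pg_point dot3_sc3)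

lemma conic_rep:
  assumes "P \<in> conic_of Q"
  shows "\<exists>v. v \<noteq> (0,0,0) \<and> P = pg_point v \<and> qform Q v = 0"
proof -
  obtain v where v: "v \<noteq> (0,0,0)" "P = pg_point v" using assms pg_points_rep unfolding conic_of_def by blast
  then show ?thesis using assms conic_mem by blast
qed

lemma line_rep:
  assumes "P \<in> pg_line_of u"
  shows "\<exists>v. v \<noteq> (0,0,0) \<and> P = pg_point v \<and> dot3 u v = 0"
proof -
  obtain v where v: "v \<noteq> (0,0,0)" "P = pg_point v" using assms pg_points_rep unfolding pg_line_of_def by blast
  then show ?thesis using assms line_mem by blast
qed

lemma distinct_nprop:
  assumes "pg_point v \<noteq> pg_point w" "v \<noteq> (0,0,0)" "w \<noteq> (0,0,0)"
  shows "w \<noteq> sc3 c v"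
  using assms pg_point_eqI sc3_zero_iff by (metis)

lemma complete1:
  assumes "a \<noteq> (0,0,0)"
  shows "\<exists>u v. det3 a u v \<noteq> 0"
proof -
  obtain a1 a2 a3 where a: "a = (a1,a2,a3)" by (cases a) auto
  show ?thesis
  proof (cases "a1 \<noteq> 0")
    case True
    then have "det3 a (0,1,0) (0,0,1) \<noteq> 0" by (simp add: a det3_def)
    then show ?thesis by blast
  next
    case F1: False
    show ?thesis
    proof (cases "a2 \<noteq> 0")
      case True
      then have "det3 a (1,0,0) (0,0,1) \<noteq> 0" using F1 by (simp add: a det3_def)
      then show ?thesis by blast
    next
      case False
      then have "a3 \<noteq> 0" using F1 assms a by auto
      then have "det3 a (1,0,0) (0,1,0) \<noteq> 0" using F1 False by (simp add: a det3_def)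
      then show ?thesis by blast
    qed
  qed
qed

lemma complete2:
  assumes "a \<noteq> (0,0,0)" "\<forall>c. b \<noteq> sc3 c a"
  shows "\<exists>w. det3 a b w \<noteq> 0"
proof (rule ccontr)
  assume H: "\<not> ?thesis"
  obtain a1 a2 a3 where a: "a = (a1,a2,a3)" by (cases a) auto
  obtain b1 b2 b3 where b: "b = (b1,b2,b3)" by (cases b) auto
  have H1: "det3 a b (1,0,0) = 0" "det3 a b (0,1,0) = 0" "det3 a b (0,0,1) = 0" using H by blast+
  have e1: "a2*b3 - a3*b2 = 0" using H1(1) by (simp add: a b det3_def)
  have e2: "a1*b3 - a3*b1 = 0" using H1(2) by (simp add: a b det3_def algebra_simps)
  have e3: "a1*b2 - a2*b1 = 0" using H1(3) by (simp add: a b det3_def)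
  consider "a1 \<noteq> 0" | "a2 \<noteq> 0" | "a3 \<noteq> 0" using assms(1) a by auto
  then show False
  proof cases
    case 1
    have "b = sc3 (b1/a1) a" using 1 e2 e3 by (simp add: a b sc3_def field_simps)
    then show False using assms(2) by blast
  next
    case 2
    have "b = sc3 (b2/a2) a" using 2 e1 e3 by (simp add: a b sc3_def field_simps)
    then show False using assms(2) by blast
  next
    case 3
    have "b = sc3 (b3/a3) a" using 3 e1 e2 by (simp add: a b sc3_def field_simps)
    then show False using assms(2) by blast
  qed
qed

lemma comb3_inj:
  assumes "det3 u v w \<noteq> 0" "comb3 x1 u y1 v z1 w = comb3 x2 u y2 v z2 w"
  shows "x1 = x2" "y1 = y2" "z1 = z2"
proof -
  show "x1 = x2" using det3_comb1[of x1 u y1 v z1 w] det3_comb1[of x2 u y2 v z2 w] assms by simp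
  show "y1 = y2" using det3_comb2[of u x1 y1 v z1 w] det3_comb2[of u x2 y2 v z2 w] assms by simp
  show "z1 = z2" using det3_comb3[of u v x1 y1 z1 w] det3_comb3[of u v x2 y2 z2 w] assms by simp
qed

lemma comb3_zero: "comb3 0 u 0 v 0 w = (0,0,0)"
  by (cases u rule: prod_cases3; cases v rule: prod_cases3; cases w rule: prod_cases3) (simp add: comb3_def)

lemma comb3_sc3: "sc3 l (comb3 a u b v c w) = comb3 (l*a) u (l*b) v (l*c) w"
  by (cases u rule: prod_cases3; cases v rule: prod_cases3; cases w rule: prod_cases3) (simp add: comb3_def sc3_def algebra_simps)

lemma comb3_single2: "comb3 0 u t v 0 w = sc3 t v"
  by (cases u rule: prod_cases3; cases v rule: prod_cases3; cases w rule: prod_cases3) (simp add: comb3_def sc3_def)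

lemma comb3_single1: "comb3 s u 0 v 0 w = sc3 s u"
  by (cases u rule: prod_cases3; cases v rule: prod_cases3; cases w rule: prod_cases3) (simp add: comb3_def sc3_def)

lemma dot3_comb: "dot3 n (comb3 a u b v c w) = a * dot3 n u + b * dot3 n v + c * dot3 n w"
  by (cases n rule: prod_cases3; cases u rule: prod_cases3; cases v rule: prod_cases3; cases w rule: prod_cases3)
     (simp add: comb3_def dot3_def algebra_simps)

lemma qform_expand: "qform (a,b,c,d,e,f) (x,y,z) = a*x^2 + b*y^2 + c*z^2 + d*x*y + e*x*z + f*y*z"
  by (simp add: qform_def)

lemma nprop_of_distinct:
  assumes "pg_point v \<noteq> pg_point w" "v \<noteq> (0,0,0)" "w \<noteq> (0,0,0)"
  shows "\<forall>c. w \<noteq> sc3 c v"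
  using distinct_nprop[OF assms] by blast

lemma NC:
  assumes Q: "qdisc Q \<noteq> 0"
    and nz: "p1 \<noteq> (0,0,0)" "p2 \<noteq> (0,0,0)" "p3 \<noteq> (0,0,0)"
    and z: "qform Q p1 = 0" "qform Q p2 = 0" "qform Q p3 = 0"
    and d: "pg_point p1 \<noteq> pg_point p2" "pg_point p1 \<noteq> pg_point p3" "pg_point p2 \<noteq> pg_point p3"
  shows "det3 p1 p2 p3 \<noteq> 0"
proof
  assume D0: "det3 p1 p2 p3 = 0"
  obtain w where w: "det3 p1 p2 w \<noteq> 0" using complete2[OF nz(1) nprop_of_distinct[OF d(1) nz(1,2)]] by blast
  define s where "s = det3 p3 p2 w / det3 p1 p2 w"
  define t where "t = det3 p1 p3 w / det3 p1 p2 w"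
  have p3: "p3 = comb3 s p1 t p2 0 w" using cramer[OF w, of p3] D0 by (simp add: s_def t_def)
  have "qform Q p3 = s * t * bil Q p1 p2"
    unfolding p3 qform_comb qtrans_def using z(1,2) by (simp add: qform_expand)
  then have st: "s * t * bil Q p1 p2 = 0" using z(3) by simp
  have "s \<noteq> 0"
  proof
    assume "s = 0"
    then have "p3 = sc3 t p2" using p3 comb3_single2 by simp
    then show False using nprop_of_distinct[OF d(3) nz(2,3)] by blast
  qed
  moreover have "t \<noteq> 0"
  proof
    assume "t = 0"
    then have "p3 = sc3 s p1" using p3 comb3_single1 by simp
    then show False using nprop_of_distinct[OF d(2) nz(1,3)] by blast
  qed
  ultimately have "bil Q p1 p2 = 0" using st by simp
  then show False using sing1[OF Q w z(1,2)] by simp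
qed

lemma dot_ortho:
  assumes "det3 a b c \<noteq> 0" "dot3 u a = 0" "dot3 u b = 0" "dot3 u c = 0"
  shows "u = (0,0,0)"
proof -
  obtain a1 a2 a3 where a: "a = (a1,a2,a3)" by (cases a) auto
  obtain b1 b2 b3 where b: "b = (b1,b2,b3)" by (cases b) auto
  obtain c1 c2 c3 where c: "c = (c1,c2,c3)" by (cases c) auto
  obtain u1 u2 u3 where u: "u = (u1,u2,u3)" by (cases u) auto
  have h: "u1*a1+u2*a2+u3*a3 = 0" "u1*b1+u2*b2+u3*b3 = 0" "u1*c1+u2*c2+u3*c3 = 0"
    using assms(2-4) by (simp_all add: a b c u dot3_def)
  let ?D = "a1*(b2*c3-b3*c2) - a2*(b1*c3-b3*c1) + a3*(b1*c2-b2*c1)"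
  have "?D * u1 = 0" "?D * u2 = 0" "?D * u3 = 0" using h by algebra+
  moreover have "?D \<noteq> 0" using assms(1) by (simp add: a b c det3_def)
  ultimately show ?thesis using u by simp
qed

lemma line_det0:
  assumes "u \<noteq> (0,0,0)" "dot3 u a = 0" "dot3 u b = 0" "dot3 u c = 0"
  shows "det3 a b c = 0"
  using dot_ortho assms by blast

definition cross3 :: "'a::field vec3 \<Rightarrow> 'a vec3 \<Rightarrow> 'a vec3" where
  "cross3 a b = (case a of (a1,a2,a3) \<Rightarrow> case b of (b1,b2,b3) \<Rightarrow>
     (a2*b3 - a3*b2, a3*b1 - a1*b3, a1*b2 - a2*b1))"

lemma dot3_sc3_left: "dot3 (sc3 c u) v = c * dot3 u v"
  by (cases u rule: prod_cases3; cases v rule: prod_cases3) (simp add: dot3_def sc3_def algebra_simps)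

lemma perp2:
  assumes "dot3 v a = 0" "dot3 v b = 0" "cross3 a b \<noteq> (0,0,0)"
  shows "\<exists>m. v = sc3 m (cross3 a b)"
proof (rule ccontr)
  assume "\<not> ?thesis"
  then obtain w where w: "det3 (cross3 a b) v w \<noteq> 0" using complete2[OF assms(3)] by blast
  obtain a1 a2 a3 where a: "a = (a1,a2,a3)" by (cases a) auto
  obtain b1 b2 b3 where b: "b = (b1,b2,b3)" by (cases b) auto
  obtain v1 v2 v3 where v: "v = (v1,v2,v3)" by (cases v) auto
  obtain w1 w2 w3 where ww: "w = (w1,w2,w3)" by (cases w) auto
  have h: "v1*a1+v2*a2+v3*a3 = 0" "v1*b1+v2*b2+v3*b3 = 0"
    using assms(1,2) by (simp_all add: a b v dot3_def)
  have "det3 (cross3 a b) v w = 0"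
    unfolding a b v ww cross3_def det3_def using h by simp algebra
  then show False using w by simp
qed

lemma conic5:
  fixes Q1 Q2 :: "'a::field qcoef"
  assumes Q1: "qdisc Q1 \<noteq> 0" and Q2: "qdisc Q2 \<noteq> 0"
    and nz: "p1 \<noteq> (0,0,0)" "p2 \<noteq> (0,0,0)" "p3 \<noteq> (0,0,0)" "p4 \<noteq> (0,0,0)" "p5 \<noteq> (0,0,0)"
    and z1: "qform Q1 p1 = 0" "qform Q1 p2 = 0" "qform Q1 p3 = 0" "qform Q1 p4 = 0" "qform Q1 p5 = 0"
    and z2: "qform Q2 p1 = 0" "qform Q2 p2 = 0" "qform Q2 p3 = 0" "qform Q2 p4 = 0" "qform Q2 p5 = 0"
    and d12: "pg_point p1 \<noteq> pg_point p2" and d13: "pg_point p1 \<noteq> pg_point p3"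
    and d14: "pg_point p1 \<noteq> pg_point p4" and d15: "pg_point p1 \<noteq> pg_point p5"
    and d23: "pg_point p2 \<noteq> pg_point p3" and d24: "pg_point p2 \<noteq> pg_point p4"
    and d25: "pg_point p2 \<noteq> pg_point p5" and d34: "pg_point p3 \<noteq> pg_point p4"
    and d35: "pg_point p3 \<noteq> pg_point p5" and d45: "pg_point p4 \<noteq> pg_point p5"
  shows "qform Q1 x = 0 \<longleftrightarrow> qform Q2 x = 0"
proof -
  define D where "D = det3 p1 p2 p3"
  have D: "D \<noteq> 0" unfolding D_def by (rule NC[OF Q1 nz(1-3) z1(1-3) d12 d13 d23])
  define x4 where "x4 = det3 p4 p2 p3 / D"
  define y4 where "y4 = det3 p1 p4 p3 / D"
  define z4 where "z4 = det3 p1 p2 p4 / D"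
  define x5 where "x5 = det3 p5 p2 p3 / D"
  define y5 where "y5 = det3 p1 p5 p3 / D"
  define z5 where "z5 = det3 p1 p2 p5 / D"
  have p4: "p4 = comb3 x4 p1 y4 p2 z4 p3" using cramer[of p1 p2 p3 p4] D
    unfolding x4_def y4_def z4_def D_def by simp
  have p5: "p5 = comb3 x5 p1 y5 p2 z5 p3" using cramer[of p1 p2 p3 p5] D
    unfolding x5_def y5_def z5_def D_def by simp
  have "det3 p4 p2 p3 \<noteq> 0" by (rule NC[OF Q1 nz(4,2,3) z1(4,2,3)]) (use d24 d34 d23 in auto)
  then have x4: "x4 \<noteq> 0" using D by (simp add: x4_def)
  have "det3 p1 p4 p3 \<noteq> 0" by (rule NC[OF Q1 nz(1,4,3) z1(1,4,3)]) (use d14 d13 d34 in auto)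
  then have y4: "y4 \<noteq> 0" using D by (simp add: y4_def)
  have "det3 p1 p2 p4 \<noteq> 0" by (rule NC[OF Q1 nz(1,2,4) z1(1,2,4)]) (use d12 d14 d24 in auto)
  then have z4: "z4 \<noteq> 0" using D by (simp add: z4_def)
  have "det3 p5 p2 p3 \<noteq> 0" by (rule NC[OF Q1 nz(5,2,3) z1(5,2,3)]) (use d25 d35 d23 in auto)
  then have x5: "x5 \<noteq> 0" using D by (simp add: x5_def)
  have "det3 p1 p5 p3 \<noteq> 0" by (rule NC[OF Q1 nz(1,5,3) z1(1,5,3)]) (use d15 d13 d35 in auto)
  then have y5: "y5 \<noteq> 0" using D by (simp add: y5_def)
  have "det3 p1 p2 p5 \<noteq> 0" by (rule NC[OF Q1 nz(1,2,5) z1(1,2,5)]) (use d12 d15 d25 in auto)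
  then have z5: "z5 \<noteq> 0" using D by (simp add: z5_def)
  define A where "A = (x4*y4, x4*z4, y4*z4)"
  define B where "B = (x5*y5, x5*z5, y5*z5)"
  have gen1: "qform Q1 (comb3 X p1 Y p2 Z p3) = dot3 (bil Q1 p1 p2, bil Q1 p1 p3, bil Q1 p2 p3) (X*Y, X*Z, Y*Z)" for X Y Z
    unfolding qform_comb qtrans_def using z1(1-3) by (simp add: qform_expand dot3_def algebra_simps)
  have gen2: "qform Q2 (comb3 X p1 Y p2 Z p3) = dot3 (bil Q2 p1 p2, bil Q2 p1 p3, bil Q2 p2 p3) (X*Y, X*Z, Y*Z)" for X Y Z
    unfolding qform_comb qtrans_def using z2(1-3) by (simp add: qform_expand dot3_def algebra_simps)
  have N: "cross3 A B \<noteq> (0,0,0)"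
  proof
    assume "cross3 A B = (0,0,0)"
    then have c: "x4*z4*(y5*z5) - y4*z4*(x5*z5) = 0" "y4*z4*(x5*y5) - x4*y4*(y5*z5) = 0"
       "x4*y4*(x5*z5) - x4*z4*(x5*y5) = 0"
      by (simp_all add: A_def B_def cross3_def)
    have e1: "x4*y5 = y4*x5"
    proof -
      have "z4*z5*(x4*y5 - y4*x5) = 0" using c(1) by (simp add: algebra_simps)
      then show ?thesis using z4 z5 by simp
    qed
    have e2: "z4*x5 = x4*z5"
    proof -
      have "y4*y5*(z4*x5 - x4*z5) = 0" using c(2) by (simp add: algebra_simps)
      then show ?thesis using y4 y5 by simp
    qed
    define l where "l = x5 / x4"
    have "x5 = l*x4" "y5 = l*y4" "z5 = l*z4" using x4 e1 e2 by (simp_all add: l_def field_simps)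
    then have "p5 = sc3 l p4" using p4 p5 by (simp add: comb3_sc3)
    moreover have "l \<noteq> 0" using x4 x5 by (simp add: l_def)
    ultimately show False using pg_point_eqI d45 by metis
  qed
  have o1: "dot3 (bil Q1 p1 p2, bil Q1 p1 p3, bil Q1 p2 p3) A = 0" "dot3 (bil Q1 p1 p2, bil Q1 p1 p3, bil Q1 p2 p3) B = 0"
    using gen1[of x4 y4 z4] gen1[of x5 y5 z5] z1(4,5) p4 p5 by (simp_all add: A_def B_def)
  have o2: "dot3 (bil Q2 p1 p2, bil Q2 p1 p3, bil Q2 p2 p3) A = 0" "dot3 (bil Q2 p1 p2, bil Q2 p1 p3, bil Q2 p2 p3) B = 0"
    using gen2[of x4 y4 z4] gen2[of x5 y5 z5] z2(4,5) p4 p5 by (simp_all add: A_def B_def)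
  obtain m1 where m1: "(bil Q1 p1 p2, bil Q1 p1 p3, bil Q1 p2 p3) = sc3 m1 (cross3 A B)"
    using perp2[OF o1 N] by blast
  obtain m2 where m2: "(bil Q2 p1 p2, bil Q2 p1 p3, bil Q2 p2 p3) = sc3 m2 (cross3 A B)"
    using perp2[OF o2 N] by blast
  have m1nz: "m1 \<noteq> 0"
  proof
    assume "m1 = 0"
    then have "bil Q1 p1 p2 = 0" using m1 by (cases "cross3 A B" rule: prod_cases3) (simp add: sc3_def)
    then show False using sing1[OF Q1 D[unfolded D_def] z1(1,2)] by simp
  qed
  have m2nz: "m2 \<noteq> 0"
  proof
    assume "m2 = 0"
    then have "bil Q2 p1 p2 = 0" using m2 by (cases "cross3 A B" rule: prod_cases3) (simp add: sc3_def)
    then show False using sing1[OF Q2 D[unfolded D_def] z2(1,2)] by simp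
  qed
  define X where "X = det3 x p2 p3 / D"
  define Y where "Y = det3 p1 x p3 / D"
  define Z where "Z = det3 p1 p2 x / D"
  have x: "x = comb3 X p1 Y p2 Z p3" using cramer[of p1 p2 p3 x] D
    unfolding X_def Y_def Z_def D_def by simp
  have "qform Q1 x = m1 * dot3 (cross3 A B) (X*Y, X*Z, Y*Z)"
    using gen1[of X Y Z] x m1 by (simp add: dot3_sc3_left)
  moreover have "qform Q2 x = m2 * dot3 (cross3 A B) (X*Y, X*Z, Y*Z)"
    using gen2[of X Y Z] x m2 by (simp add: dot3_sc3_left)
  ultimately show ?thesis using m1nz m2nz by simp
qed

lemma card_distinct_list:
  assumes "finite S" "n \<le> card S"
  shows "\<exists>xs. distinct xs \<and> set xs \<subseteq> S \<and> length xs = n"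
proof -
  obtain ys where ys: "distinct ys" "set ys = S" using finite_distinct_list[OF assms(1)] by blast
  then have "length ys = card S" using distinct_card by fastforce
  then show ?thesis using ys assms(2) by (intro exI[of _ "take n ys"]) (auto dest: in_set_takeD)
qed

lemma conic_line_int:
  fixes Q :: "'a::{finite,field} qcoef"
  assumes Q: "qdisc Q \<noteq> 0" and u: "u \<noteq> (0,0,0)"
  shows "card (conic_of Q \<inter> pg_line_of u) \<le> 2"
proof (rule ccontr)
  assume "\<not> ?thesis"
  then have c3: "3 \<le> card (conic_of Q \<inter> pg_line_of u)" by simp
  have fin: "finite (conic_of Q \<inter> pg_line_of u)" by simp
  obtain xs where xs: "distinct xs" "set xs \<subseteq> conic_of Q \<inter> pg_line_of u" "length xs = 3"
    using card_distinct_list[OF fin c3] by blast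
  have mem: "xs!i \<in> conic_of Q" "xs!i \<in> pg_line_of u" if "i < 3" for i
  proof -
    have "xs!i \<in> set xs" using that xs(3) by simp
    then show "xs!i \<in> conic_of Q" "xs!i \<in> pg_line_of u" using xs(2) by blast+
  qed
  have dis: "xs!i \<noteq> xs!j" if "i < 3" "j < 3" "i \<noteq> j" for i j
    using xs(1,3) that by (simp add: nth_eq_iff_index_eq)
  have H: "\<forall>i. \<exists>v. i < 3 \<longrightarrow> (v \<noteq> (0,0,0) \<and> xs!i = pg_point v \<and> qform Q v = 0 \<and> dot3 u v = 0)"
  proof
    fix i
    show "\<exists>v. i < 3 \<longrightarrow> (v \<noteq> (0,0,0) \<and> xs!i = pg_point v \<and> qform Q v = 0 \<and> dot3 u v = 0)"
    proof (cases "i < 3")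
      case True
      obtain v where v: "v \<noteq> (0,0,0)" "xs!i = pg_point v" "qform Q v = 0"
        using conic_rep[OF mem(1)[OF True]] by blast
      have "dot3 u v = 0" using line_mem[OF v(1)] mem(2)[OF True] v(2) by simp
      then show ?thesis using v by blast
    qed simp
  qed
  obtain p where p: "\<forall>i. i < 3 \<longrightarrow> (p i \<noteq> (0,0,0) \<and> xs!i = pg_point (p i) \<and> qform Q (p i) = 0 \<and> dot3 u (p i) = 0)"
    using choice[OF H] by blast
  have a0: "p 0 \<noteq> (0,0,0)" "qform Q (p 0) = 0" "dot3 u (p 0) = 0" "xs!0 = pg_point (p 0)" using p by simp_all
  have a1: "p 1 \<noteq> (0,0,0)" "qform Q (p 1) = 0" "dot3 u (p 1) = 0" "xs!1 = pg_point (p 1)" using p by simp_all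
  have a2: "p 2 \<noteq> (0,0,0)" "qform Q (p 2) = 0" "dot3 u (p 2) = 0" "xs!2 = pg_point (p 2)" using p by simp_all
  have "pg_point (p 0) \<noteq> pg_point (p 1)" "pg_point (p 0) \<noteq> pg_point (p 2)" "pg_point (p 1) \<noteq> pg_point (p 2)"
    using dis[of 0 1] dis[of 0 2] dis[of 1 2] a0(4) a1(4) a2(4) by simp_all
  then have "det3 (p 0) (p 1) (p 2) \<noteq> 0"
    by (intro NC[OF Q a0(1) a1(1) a2(1) a0(2) a1(2) a2(2)])
  moreover have "det3 (p 0) (p 1) (p 2) = 0"
    by (rule line_det0[OF u a0(3) a1(3) a2(3)])
  ultimately show False by simp
qed

lemma line_line_int:
  fixes u1 :: "'a::{finite,field} vec3"
  assumes u1: "u1 \<noteq> (0,0,0)" and u2: "u2 \<noteq> (0,0,0)" and ne: "pg_line_of u1 \<noteq> pg_line_of u2"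
  shows "card (pg_line_of u1 \<inter> pg_line_of u2) \<le> 1"
proof (rule ccontr)
  assume "\<not> ?thesis"
  then have c2: "2 \<le> card (pg_line_of u1 \<inter> pg_line_of u2)" by simp
  have fin: "finite (pg_line_of u1 \<inter> pg_line_of u2)" by simp
  obtain xs where xs: "distinct xs" "set xs \<subseteq> pg_line_of u1 \<inter> pg_line_of u2" "length xs = 2"
    using card_distinct_list[OF fin c2] by blast
  have mem: "xs!i \<in> pg_line_of u1" "xs!i \<in> pg_line_of u2" if "i < 2" for i
  proof -
    have "xs!i \<in> set xs" using that xs(3) by simp
    then show "xs!i \<in> pg_line_of u1" "xs!i \<in> pg_line_of u2" using xs(2) by blast+
  qed
  have rep: "\<exists>v. v \<noteq> (0,0,0) \<and> xs!i = pg_point v \<and> dot3 u1 v = 0 \<and> dot3 u2 v = 0" if i2: "i < 2" for i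
  proof -
    obtain v where v: "v \<noteq> (0,0,0)" "xs!i = pg_point v" "dot3 u1 v = 0"
      using line_rep[OF mem(1)[OF i2]] by blast
    have "dot3 u2 v = 0" using line_mem[OF v(1)] mem(2)[OF i2] v(2) by simp
    then show ?thesis using v by blast
  qed
  obtain p0 where a0: "p0 \<noteq> (0,0,0)" "xs!0 = pg_point p0" "dot3 u1 p0 = 0" "dot3 u2 p0 = 0"
    using rep[of 0] by auto
  obtain p1 where a1: "p1 \<noteq> (0,0,0)" "xs!1 = pg_point p1" "dot3 u1 p1 = 0" "dot3 u2 p1 = 0"
    using rep[of 1] by auto
  have "xs!0 \<noteq> xs!1" using xs(1,3) by (simp add: nth_eq_iff_index_eq)
  then have d: "pg_point p0 \<noteq> pg_point p1" using a0(2) a1(2) by simp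
  obtain w where w: "det3 p0 p1 w \<noteq> 0"
    using complete2[OF a0(1) nprop_of_distinct[OF d a0(1) a1(1)]] by blast
  have w1: "dot3 u1 w \<noteq> 0" using dot_ortho[OF w a0(3) a1(3)] u1 by auto
  have w2: "dot3 u2 w \<noteq> 0" using dot_ortho[OF w a0(4) a1(4)] u2 by auto
  have eqv: "dot3 u1 v = 0 \<longleftrightarrow> dot3 u2 v = 0" for v
  proof -
    define D where "D = det3 p0 p1 w"
    have v: "v = comb3 (det3 v p1 w / D) p0 (det3 p0 v w / D) p1 (det3 p0 p1 v / D) w"
      unfolding D_def by (rule cramer[OF w])
    have "dot3 u1 v = (det3 p0 p1 v / D) * dot3 u1 w" "dot3 u2 v = (det3 p0 p1 v / D) * dot3 u2 w"
      using a0 a1 by (subst v, simp add: dot3_comb)+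
    then show ?thesis using w1 w2 by simp
  qed
  have "pg_line_of u1 = pg_line_of u2" unfolding pg_line_of_def using eqv by auto
  then show False using ne by simp
qed

lemma conic_conic_int:
  fixes Q1 :: "'a::{finite,field} qcoef"
  assumes Q1: "qdisc Q1 \<noteq> 0" and Q2: "qdisc Q2 \<noteq> 0" and ne: "conic_of Q1 \<noteq> conic_of Q2"
  shows "card (conic_of Q1 \<inter> conic_of Q2) \<le> 4"
proof (rule ccontr)
  assume "\<not> ?thesis"
  then have c5: "5 \<le> card (conic_of Q1 \<inter> conic_of Q2)" by simp
  have fin: "finite (conic_of Q1 \<inter> conic_of Q2)" by simp
  obtain xs where xs: "distinct xs" "set xs \<subseteq> conic_of Q1 \<inter> conic_of Q2" "length xs = 5"
    using card_distinct_list[OF fin c5] by blast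
  have mem: "xs!i \<in> conic_of Q1" "xs!i \<in> conic_of Q2" if "i < 5" for i
  proof -
    have "xs!i \<in> set xs" using that xs(3) by simp
    then show "xs!i \<in> conic_of Q1" "xs!i \<in> conic_of Q2" using xs(2) by blast+
  qed
  have rep: "\<exists>v. v \<noteq> (0,0,0) \<and> xs!i = pg_point v \<and> qform Q1 v = 0 \<and> qform Q2 v = 0" if i5: "i < 5" for i
  proof -
    obtain v where v: "v \<noteq> (0,0,0)" "xs!i = pg_point v" "qform Q1 v = 0"
      using conic_rep[OF mem(1)[OF i5]] by blast
    have "qform Q2 v = 0" using conic_mem[OF v(1)] mem(2)[OF i5] v(2) by simp
    then show ?thesis using v by blast
  qed
  obtain p0 where a0: "p0 \<noteq> (0,0,0)" "qform Q1 p0 = 0" "qform Q2 p0 = 0" "xs!0 = pg_point p0"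
    using rep[of 0] by auto
  obtain p1 where a1: "p1 \<noteq> (0,0,0)" "qform Q1 p1 = 0" "qform Q2 p1 = 0" "xs!1 = pg_point p1"
    using rep[of 1] by auto
  obtain p2 where a2: "p2 \<noteq> (0,0,0)" "qform Q1 p2 = 0" "qform Q2 p2 = 0" "xs!2 = pg_point p2"
    using rep[of 2] by auto
  obtain p3 where a3: "p3 \<noteq> (0,0,0)" "qform Q1 p3 = 0" "qform Q2 p3 = 0" "xs!3 = pg_point p3"
    using rep[of 3] by auto
  obtain p4 where a4: "p4 \<noteq> (0,0,0)" "qform Q1 p4 = 0" "qform Q2 p4 = 0" "xs!4 = pg_point p4"
    using rep[of 4] by auto
  have "xs!0 \<noteq> xs!1" using xs(1,3) by (simp add: nth_eq_iff_index_eq)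
  then have d01: "pg_point p0 \<noteq> pg_point p1" using a0(4) a1(4) by simp
  have "xs!0 \<noteq> xs!2" using xs(1,3) by (simp add: nth_eq_iff_index_eq)
  then have d02: "pg_point p0 \<noteq> pg_point p2" using a0(4) a2(4) by simp
  have "xs!0 \<noteq> xs!3" using xs(1,3) by (simp add: nth_eq_iff_index_eq)
  then have d03: "pg_point p0 \<noteq> pg_point p3" using a0(4) a3(4) by simp
  have "xs!0 \<noteq> xs!4" using xs(1,3) by (simp add: nth_eq_iff_index_eq)
  then have d04: "pg_point p0 \<noteq> pg_point p4" using a0(4) a4(4) by simp
  have "xs!1 \<noteq> xs!2" using xs(1,3) by (simp add: nth_eq_iff_index_eq)
  then have d12: "pg_point p1 \<noteq> pg_point p2" using a1(4) a2(4) by simp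
  have "xs!1 \<noteq> xs!3" using xs(1,3) by (simp add: nth_eq_iff_index_eq)
  then have d13: "pg_point p1 \<noteq> pg_point p3" using a1(4) a3(4) by simp
  have "xs!1 \<noteq> xs!4" using xs(1,3) by (simp add: nth_eq_iff_index_eq)
  then have d14: "pg_point p1 \<noteq> pg_point p4" using a1(4) a4(4) by simp
  have "xs!2 \<noteq> xs!3" using xs(1,3) by (simp add: nth_eq_iff_index_eq)
  then have d23: "pg_point p2 \<noteq> pg_point p3" using a2(4) a3(4) by simp
  have "xs!2 \<noteq> xs!4" using xs(1,3) by (simp add: nth_eq_iff_index_eq)
  then have d24: "pg_point p2 \<noteq> pg_point p4" using a2(4) a4(4) by simp
  have "xs!3 \<noteq> xs!4" using xs(1,3) by (simp add: nth_eq_iff_index_eq)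
  then have d34: "pg_point p3 \<noteq> pg_point p4" using a3(4) a4(4) by simp
  have eqv: "qform Q1 x = 0 \<longleftrightarrow> qform Q2 x = 0" for x
    by (rule conic5[OF Q1 Q2 a0(1) a1(1) a2(1) a3(1) a4(1) a0(2) a1(2) a2(2) a3(2) a4(2) a0(3) a1(3) a2(3) a3(3) a4(3) d01 d02 d03 d04 d12 d13 d14 d23 d24 d34])
  have "conic_of Q1 = conic_of Q2" unfolding conic_of_def using eqv by auto
  then show False using ne by simp
qed

lemma line_card_aux:
  fixes u :: "'a::{finite,field} vec3"
  assumes w: "det3 a b w \<noteq> 0" and da: "dot3 u a = 0" and db: "dot3 u b = 0"
  shows "CARD('a) \<le> card (pg_line_of u)"
proof -
  let ?f = "\<lambda>t::'a. pg_point (comb3 1 a t b 0 w)"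
  have nz: "comb3 1 a t b 0 w \<noteq> (0,0,0)" for t
  proof
    assume "comb3 1 a t b 0 w = (0,0,0)"
    then have "comb3 1 a t b 0 w = comb3 0 a 0 b 0 w" by (simp add: comb3_zero)
    then have "(1::'a) = 0" by (rule comb3_inj(1)[OF w])
    then show False by simp
  qed
  have inj: "inj ?f"
  proof (rule injI)
    fix t t' assume "?f t = ?f t'"
    then obtain c where "comb3 1 a t b 0 w = sc3 c (comb3 1 a t' b 0 w)" using pg_point_eqD by blast
    then have e: "comb3 1 a t b 0 w = comb3 c a (c*t') b (c*0) w" by (simp add: comb3_sc3)
    have "1 = c" using comb3_inj(1)[OF w e] .
    then show "t = t'" using comb3_inj(2)[OF w e] by simp
  qed
  have sub: "range ?f \<subseteq> pg_line_of u"
  proof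
    fix P assume "P \<in> range ?f"
    then obtain t where t: "P = ?f t" by blast
    have "dot3 u (comb3 1 a t b 0 w) = 0" by (simp add: dot3_comb da db)
    then show "P \<in> pg_line_of u" using line_mem[OF nz[of t]] t by simp
  qed
  have "CARD('a) = card (range ?f)" using inj by (simp add: card_image)
  also have "\<dots> \<le> card (pg_line_of u)" by (rule card_mono[OF _ sub]) simp
  finally show ?thesis .
qed

lemma line_card:
  fixes u :: "'a::{finite,field} vec3"
  assumes u: "u \<noteq> (0,0,0)"
  shows "CARD('a) \<le> card (pg_line_of u)"
proof -
  obtain u1 u2 u3 where uu: "u = (u1,u2,u3)" by (cases u) auto
  consider "u1 \<noteq> 0" | "u2 \<noteq> 0" | "u3 \<noteq> 0" using u uu by auto
  then show ?thesis
  proof cases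
    case 1
    show ?thesis
      by (rule line_card_aux[of "(-u2, u1, 0)" "(-u3, 0, u1)" "(1,0,0)"]) (use 1 in \<open>simp_all add: uu det3_def dot3_def algebra_simps\<close>)
  next
    case 2
    show ?thesis
      by (rule line_card_aux[of "(u2, -u1, 0)" "(0, -u3, u2)" "(0,1,0)"]) (use 2 in \<open>simp_all add: uu det3_def dot3_def algebra_simps\<close>)
  next
    case 3
    show ?thesis
      by (rule line_card_aux[of "(u3, 0, -u1)" "(0, u3, -u2)" "(0,0,1)"]) (use 3 in \<open>simp_all add: uu det3_def dot3_def algebra_simps\<close>)
  qed
qed

lemma conic_card:
  fixes Q :: "'a::{finite,field} qcoef"
  assumes Q: "qdisc Q \<noteq> 0"
  shows "CARD('a) - 1 \<le> card (conic_of Q)"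
proof -
  obtain p where p: "p \<noteq> (0,0,0)" "qform Q p = 0" using qform_has_zero by blast
  obtain u v where D: "det3 p u v \<noteq> 0" using complete1[OF p(1)] by blast
  define b0 where "b0 = bil Q p u"
  define b1 where "b1 = bil Q p v"
  have nb: "b0 \<noteq> 0 \<or> b1 \<noteq> 0" using sing2[OF Q D p(2)] by (auto simp: b0_def b1_def)
  define r where "r = (if b1 = 0 then 0 else - b0 / b1)"
  let ?T = "UNIV - {r}"
  have T: "b0 + t * b1 \<noteq> 0" if "t \<in> ?T" for t
  proof
    assume z: "b0 + t * b1 = 0"
    show False
    proof (cases "b1 = 0")
      case True then show False using z nb by simp
    next
      case False
      then have "t = - b0 / b1" using z by (simp add: field_simps add_eq_0_iff)
      then show False using that False by (simp add: r_def)
    qed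
  qed
  define s where "s t = - (qform Q u + t^2 * qform Q v + t * bil Q u v) / (b0 + t * b1)" for t
  let ?g = "\<lambda>t. comb3 (s t) p 1 u t v"
  let ?f = "\<lambda>t. pg_point (?g t)"
  have nz: "?g t \<noteq> (0,0,0)" for t
  proof
    assume "?g t = (0,0,0)"
    then have "?g t = comb3 0 p 0 u 0 v" by (simp add: comb3_zero)
    then have "(1::'a) = 0" by (rule comb3_inj(2)[OF D])
    then show False by simp
  qed
  have onc: "qform Q (?g t) = 0" if "t \<in> ?T" for t
  proof -
    have "qform Q (?g t) = s t * (b0 + t * b1) + (qform Q u + t^2 * qform Q v + t * bil Q u v)"
      unfolding qform_comb qtrans_def using p(2) by (simp add: qform_expand b0_def b1_def algebra_simps power2_eq_square)
    then show ?thesis using T[OF that] by (simp add: s_def)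
  qed
  have inj: "inj_on ?f ?T"
  proof (rule inj_onI)
    fix t t' assume "t \<in> ?T" "t' \<in> ?T" "?f t = ?f t'"
    then obtain c where "?g t = sc3 c (?g t')" using pg_point_eqD by blast
    then have e: "?g t = comb3 (c * s t') p (c*1) u (c*t') v" by (simp add: comb3_sc3)
    have "1 = c*1" using comb3_inj(2)[OF D e] .
    then show "t = t'" using comb3_inj(3)[OF D e] by simp
  qed
  have sub: "?f ` ?T \<subseteq> conic_of Q"
    using nz onc conic_mem by blast
  have "CARD('a) - 1 = card ?T" by (simp add: card_Diff_subset)
  also have "\<dots> = card (?f ` ?T)" using inj by (simp add: card_image)
  also have "\<dots> \<le> card (conic_of Q)" by (rule card_mono[OF _ sub]) simp
  finally show ?thesis .
qed

lemma card_symdiff_parity: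
  assumes "finite A" "finite B"
  shows "odd (card ((A - B) \<union> (B - A))) \<longleftrightarrow> (odd (card A) \<noteq> odd (card B))"
proof -
  have a: "card A = card (A - B) + card (A \<inter> B)"
    using card_Int_Diff[OF assms(1), of B] by simp
  have b: "card B = card (B - A) + card (A \<inter> B)"
    using card_Int_Diff[OF assms(2), of A] by (simp add: Int_commute)
  have c: "card ((A - B) \<union> (B - A)) = card (A - B) + card (B - A)"
    using assms by (intro card_Un_disjoint) auto
  show ?thesis unfolding c using a b by auto
qed

lemma syndrome_err:
  assumes fK: "finite K" and ker: "in_kernel R K H c" and r: "r \<in> R"
  shows "syndrome R K H (\<lambda>k. c k \<noteq> e k) r \<longleftrightarrow> odd (card {j\<in>K. H r j \<and> e j})"
proof -
  let ?A = "{j\<in>K. H r j \<and> c j}" and ?B = "{j\<in>K. H r j \<and> e j}"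
  have eq: "{j\<in>K. H r j \<and> (c j \<noteq> e j)} = (?A - ?B) \<union> (?B - ?A)" by auto
  have "even (card ?A)" using ker r by (simp add: in_kernel_def)
  then show ?thesis unfolding syndrome_def eq using card_symdiff_parity[of ?A ?B] fK by simp
qed

lemma card_UN_bound:
  assumes "finite I" "\<forall>k\<in>I. finite (A k)" "\<forall>k\<in>I. card (A k) \<le> (b::nat)"
  shows "card (\<Union>k\<in>I. A k) \<le> b * card I"
proof -
  have "card (\<Union>k\<in>I. A k) \<le> (\<Sum>k\<in>I. card (A k))" by (rule card_UN_le[OF assms(1)])
  also have "\<dots> \<le> (\<Sum>k\<in>I. b)" using assms(3) by (intro sum_mono) auto
  also have "\<dots> = b * card I" by simp
  finally show ?thesis .
qed

lemma decode:
  fixes R :: "'r set" and K :: "'k set" and H :: "'r \<Rightarrow> 'k \<Rightarrow> bool"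
  assumes fR: "finite R" and fK: "finite K"
    and colw: "\<forall>j\<in>K. m \<le> card {r\<in>R. H r j}"
    and inter: "\<forall>j\<in>K. \<forall>k\<in>K. j \<noteq> k \<longrightarrow> card {r\<in>R. H r j \<and> H r k} \<le> 4"
    and ker: "in_kernel R K H c"
    and wt: "hweight K e \<le> w0" and w0: "8 * w0 \<le> v" and mv: "v < m + 4"
    and j: "j \<in> K"
  shows "bitflip R K H v (\<lambda>k. c k \<noteq> e k) j = c j"
proof -
  let ?y = "\<lambda>k. c k \<noteq> e k"
  let ?s = "syndrome R K H ?y"
  let ?E = "{k\<in>K. e k}"
  have fE: "finite ?E" using fK by simp
  have wE: "card ?E \<le> w0" using wt by (simp add: hweight_def)
  have syn: "?s r \<longleftrightarrow> odd (card {k\<in>K. H r k \<and> e k})" if "r \<in> R" for r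
    using syndrome_err[OF fK ker that] .
  show ?thesis
  proof (cases "e j")
    case True
    let ?bad = "{r\<in>R. H r j \<and> \<not> ?s r}"
    let ?good = "{r\<in>R. H r j \<and> ?s r}"
    have split: "{r\<in>R. H r j} = ?good \<union> ?bad" by auto
    have cs: "card {r\<in>R. H r j} = card ?good + card ?bad"
      unfolding split using fR by (intro card_Un_disjoint) auto
    have sub: "?bad \<subseteq> (\<Union>k\<in>?E - {j}. {r\<in>R. H r j \<and> H r k})"
    proof
      fix r assume rb: "r \<in> ?bad"
      then have ev: "even (card {k\<in>K. H r k \<and> e k})" using syn by auto
      have jin: "j \<in> {k\<in>K. H r k \<and> e k}" using rb j True by auto
      have "{k\<in>K. H r k \<and> e k} \<noteq> {j}" using ev by auto
      then obtain k where "k \<in> {k\<in>K. H r k \<and> e k}" "k \<noteq> j" using jin by blast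
      then show "r \<in> (\<Union>k\<in>?E - {j}. {r\<in>R. H r j \<and> H r k})" using rb by auto
    qed
    have "card ?bad \<le> card (\<Union>k\<in>?E - {j}. {r\<in>R. H r j \<and> H r k})"
      by (rule card_mono[OF finite_subset[OF _ fR] sub]) auto
    also have "\<dots> \<le> 4 * card (?E - {j})"
      by (rule card_UN_bound) (use fE fR inter j in auto)
    also have "card (?E - {j}) = card ?E - 1" using j True fE by simp
    finally have "card ?bad \<le> 4 * (card ?E - 1)" .
    moreover have "card ?E \<ge> 1"
    proof -
      have "?E \<noteq> {}" using j True by blast
      then show ?thesis using fE by (simp add: Suc_leI card_gt_0_iff)
    qed
    moreover have "m \<le> card ?good + card ?bad" using colw j by (simp only: cs[symmetric])
    ultimately have "2 * card ?good > v" using wE w0 mv by linarith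
    then have "2 * unsat R K H ?y j > v" by (simp add: unsat_def)
    then show ?thesis using True by (simp add: bitflip_def)
  next
    case False
    let ?good = "{r\<in>R. H r j \<and> ?s r}"
    have sub: "?good \<subseteq> (\<Union>k\<in>?E. {r\<in>R. H r j \<and> H r k})"
    proof
      fix r assume rg: "r \<in> ?good"
      then have "odd (card {k\<in>K. H r k \<and> e k})" using syn by auto
      then have "{k\<in>K. H r k \<and> e k} \<noteq> {}" by (metis card.empty even_zero)
      then obtain k where "k \<in> K" "H r k" "e k" by blast
      then show "r \<in> (\<Union>k\<in>?E. {r\<in>R. H r j \<and> H r k})" using rg by auto
    qed
    have "card ?good \<le> card (\<Union>k\<in>?E. {r\<in>R. H r j \<and> H r k})"
      by (rule card_mono[OF finite_subset[OF _ fR] sub]) auto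
    also have "\<dots> \<le> 4 * card ?E"
    proof (rule card_UN_bound)
      show "\<forall>k\<in>?E. card {r\<in>R. H r j \<and> H r k} \<le> 4"
      proof
        fix k assume "k \<in> ?E"
        then have "k \<in> K" "k \<noteq> j" using False by auto
        then show "card {r\<in>R. H r j \<and> H r k} \<le> 4" using inter[rule_format, OF j \<open>k \<in> K\<close>] by simp
      qed
    qed (use fE fR in auto)
    finally have "2 * unsat R K H ?y j \<le> v" using wE w0 by (simp add: unsat_def)
    then show ?thesis using False by (simp add: bitflip_def)
  qed
qed

lemma col_line: "L \<in> pg_lines \<Longrightarrow> {r\<in>pg_points. Hent r (Inl L)} = L"
  by (auto simp: Hent_def pg_lines_def pg_line_of_def)

lemma line_in_lines: "u \<noteq> (0,0,0) \<Longrightarrow> pg_line_of u \<in> pg_lines"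
  unfolding pg_lines_def by blast

lemma conic_in_conics: "qdisc Q \<noteq> 0 \<Longrightarrow> conic_of Q \<in> pg_conics"
  unfolding pg_conics_def by blast

lemma col_conic: "C \<in> pg_conics \<Longrightarrow> {r\<in>pg_points. Hent r (Inr (i, C))} = C"
  by (auto simp: Hent_def pg_conics_def conic_of_def)

theorem proposition5p3:
  fixes \<Gamma> :: "nat \<Rightarrow> ('a::{finite,field}) vec3 set set set" and t :: nat
  assumes "t > 1"
    and "\<forall>i\<in>{1..t}. proj_bundle (\<Gamma> i)"
    and "\<forall>i\<in>{1..t}. \<forall>j\<in>{1..t}. i \<noteq> j \<longrightarrow> \<Gamma> i \<inter> \<Gamma> j = {}"
  shows "max_col_intersection pg_points (Hcols t \<Gamma>) Hent \<le> 4
    \<and> (\<forall>c e. in_kernel pg_points (Hcols t \<Gamma>) Hent c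
          \<and> hweight (Hcols t \<Gamma>) e \<le> (CARD('a) + 1) div 8
          \<longrightarrow> (\<forall>j\<in>Hcols t \<Gamma>.
                bitflip pg_points (Hcols t \<Gamma>) Hent (CARD('a) + 1) (\<lambda>k. c k \<noteq> e k) j = c j))"
proof -
  let ?K = "Hcols t \<Gamma>" and ?R = "pg_points :: 'a vec3 set set"
  let ?q = "CARD('a)"
  have q2: "?q \<ge> 2" by (rule ff_card_ge2)
  have sub: "\<Gamma> i \<subseteq> pg_conics" if "i \<in> {1..t}" for i
    using assms(2) that by (simp add: proj_bundle_def)
  have Kcases: "(\<exists>u. j = Inl (pg_line_of u) \<and> u \<noteq> (0,0,0)) \<or>
      (\<exists>i C Q. j = Inr (i, C) \<and> i \<in> {1..t} \<and> C \<in> \<Gamma> i \<and> C = conic_of Q \<and> qdisc Q \<noteq> 0)"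
    if "j \<in> ?K" for j
  proof -
    from that consider (L) L where "L \<in> pg_lines" "j = Inl L" | (C) i C where "i \<in> {1..t}" "C \<in> \<Gamma> i" "j = Inr (i, C)"
      unfolding Hcols_def by blast
    then show ?thesis
    proof cases
      case L then show ?thesis by (auto simp: pg_lines_def)
    next
      case C
      then have "C \<in> pg_conics" using sub by blast
      then show ?thesis using C by (auto simp: pg_conics_def)
    qed
  qed
  have colw: "\<forall>j\<in>?K. ?q - 1 \<le> card {r\<in>?R. Hent r j}"
  proof
    fix j assume j: "j \<in> ?K"
    from Kcases[OF j] show "?q - 1 \<le> card {r\<in>?R. Hent r j}"
    proof
      assume "\<exists>u. j = Inl (pg_line_of u) \<and> u \<noteq> (0,0,0)"
      then obtain u where u: "j = Inl (pg_line_of u)" "u \<noteq> (0,0,0)" by blast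
      have "pg_line_of u \<in> pg_lines" using u(2) by (rule line_in_lines)
      then show ?thesis using line_card[OF u(2)] u(1) col_line by fastforce
    next
      assume "\<exists>i C Q. j = Inr (i, C) \<and> i \<in> {1..t} \<and> C \<in> \<Gamma> i \<and> C = conic_of Q \<and> qdisc Q \<noteq> 0"
      then obtain i C Q where c: "j = Inr (i, C)" "C = conic_of Q" "qdisc Q \<noteq> 0" by blast
      have "C \<in> pg_conics" using c conic_in_conics by simp
      then show ?thesis using conic_card[OF c(3)] c col_conic by fastforce
    qed
  qed
  have inter: "\<forall>j\<in>?K. \<forall>k\<in>?K. j \<noteq> k \<longrightarrow> card {r\<in>?R. Hent r j \<and> Hent r k} \<le> 4"
  proof (intro ballI impI)
    fix j k assume j: "j \<in> ?K" and k: "k \<in> ?K" and jk: "j \<noteq> k"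
    have eq: "{r\<in>?R. Hent r j \<and> Hent r k} = {r\<in>?R. Hent r j} \<inter> {r\<in>?R. Hent r k}" by auto
    show "card {r\<in>?R. Hent r j \<and> Hent r k} \<le> 4"
    proof (cases "\<exists>u. j = Inl (pg_line_of u) \<and> u \<noteq> (0,0,0)")
      case True
      then obtain u where u: "j = Inl (pg_line_of u)" "u \<noteq> (0,0,0)" by blast
      have cj: "{r\<in>?R. Hent r j} = pg_line_of u" using u col_line[OF line_in_lines[OF u(2)]] by simp
      show ?thesis
      proof (cases "\<exists>u. k = Inl (pg_line_of u) \<and> u \<noteq> (0,0,0)")
        case True
        then obtain u' where u': "k = Inl (pg_line_of u')" "u' \<noteq> (0,0,0)" by blast
        have ck: "{r\<in>?R. Hent r k} = pg_line_of u'" using u' col_line[OF line_in_lines[OF u'(2)]] by simp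
        have "pg_line_of u \<noteq> pg_line_of u'" using jk u u' by auto
        then show ?thesis using line_line_int[OF u(2) u'(2)] eq cj ck by simp
      next
        case False
        then obtain i C Q where c: "k = Inr (i, C)" "C = conic_of Q" "qdisc Q \<noteq> 0" using Kcases[OF k] by blast
        have "C \<in> pg_conics" using c conic_in_conics by simp
        then have ck: "{r\<in>?R. Hent r k} = C" using c col_conic by simp
        show ?thesis using conic_line_int[OF c(3) u(2)] eq cj ck c(2) by (simp add: Int_commute)
      qed
    next
      case False
      then obtain i C Q where c: "j = Inr (i, C)" "i \<in> {1..t}" "C \<in> \<Gamma> i" "C = conic_of Q" "qdisc Q \<noteq> 0"
        using Kcases[OF j] by blast
      have "C \<in> pg_conics" using c conic_in_conics by simp
      then have cj: "{r\<in>?R. Hent r j} = C" using c col_conic by simp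
      show ?thesis
      proof (cases "\<exists>u. k = Inl (pg_line_of u) \<and> u \<noteq> (0,0,0)")
        case True
        then obtain u' where u': "k = Inl (pg_line_of u')" "u' \<noteq> (0,0,0)" by blast
        have ck: "{r\<in>?R. Hent r k} = pg_line_of u'" using u' col_line[OF line_in_lines[OF u'(2)]] by simp
        show ?thesis using conic_line_int[OF c(5) u'(2)] eq cj ck c(4) by simp
      next
        case False
        then obtain i' C' Q' where c': "k = Inr (i', C')" "i' \<in> {1..t}" "C' \<in> \<Gamma> i'" "C' = conic_of Q'" "qdisc Q' \<noteq> 0"
          using Kcases[OF k] by blast
        have "C' \<in> pg_conics" using c' conic_in_conics by simp
        then have ck: "{r\<in>?R. Hent r k} = C'" using c' col_conic by simp
        have "C \<noteq> C'"
        proof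
          assume CC: "C = C'"
          then have "i \<noteq> i'" using jk c c' by auto
          then have "\<Gamma> i \<inter> \<Gamma> i' = {}" using assms(3) c(2) c'(2) by blast
          then show False using c(3) c'(3) CC by blast
        qed
        then show ?thesis using conic_conic_int[OF c(5) c'(5)] eq cj ck c(4) c'(4) by simp
      qed
    qed
  qed
  have fR: "finite ?R" by simp
  have fK: "finite ?K" unfolding Hcols_def by simp
  have part1: "max_col_intersection ?R ?K Hent \<le> 4"
  proof -
    let ?S = "{card {r\<in>?R. Hent r j \<and> Hent r k} | j k. j \<in> ?K \<and> k \<in> ?K \<and> j \<noteq> k}"
    have bnd: "\<And>a. a \<in> ?S \<Longrightarrow> a \<le> 4" using inter by blast
    have fS: "finite ?S" by (rule finite_subset[of _ "{..4}"]) (use bnd in auto)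
    have t1: "1 \<in> {1..t}" using assms(1) by simp
    have "card (\<Gamma> 1) = ?q^2 + ?q + 1" using assms(2) t1 by (simp add: proj_bundle_def)
    then have "\<Gamma> 1 \<noteq> {}" by auto
    then obtain C where C: "C \<in> \<Gamma> 1" by blast
    have "pg_line_of (1,0,0) \<in> (pg_lines :: 'a vec3 set set set)" by (rule line_in_lines) simp
    then have j0: "Inl (pg_line_of (1,0,0)) \<in> ?K" unfolding Hcols_def by blast
    have k0: "Inr (1, C) \<in> ?K" unfolding Hcols_def using t1 C by blast
    have "card {r\<in>?R. Hent r (Inl (pg_line_of (1,0,0))) \<and> Hent r (Inr (1, C))} \<in> ?S"
      using j0 k0 by blast
    then have ne: "?S \<noteq> {}" by blast
    show ?thesis unfolding max_col_intersection_def by (rule Max.boundedI[OF fS ne]) (use bnd in blast)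
  qed
  have part2: "bitflip ?R ?K Hent (?q + 1) (\<lambda>k. c k \<noteq> e k) j = c j"
    if "in_kernel ?R ?K Hent c" "hweight ?K e \<le> (?q + 1) div 8" "j \<in> ?K" for c e j
    by (rule decode[OF fR fK colw inter that(1) that(2) _ _ that(3)]) (use q2 in auto)
  show ?thesis using part1 part2 by blast
qed

end
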